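(* Let $\mathcal G_i=G_i^S\cup G_i^I$ and $\mathcal G_j=G_j^S\cup G_j^I$ be two networks with vertex-disjoint state graphs $G_i^S=(V_i^S,E_i^S)$, $G_j^S=(V_j^S,E_j^S)$ and disjoint sets of input nodes, and suppose both $\mathcal G_i$ and $\mathcal G_j$ are strongly structurally controllable (SSC). Let the bridge graph between them consist of exactly one edge $\{k,l\}$ with $k\in V_i^S$, $l\in V_j^S$ (arbitrary). Then the merged network, whose state graph has vertex set $V_i^S\cup V_j^S$ and edge set $E_i^S\cup E_j^S\cup\{\{k,l\}\}$ and whose input nodes are those of $\mathcal G_i$ together with those of $\mathcal G_j$ (attached as before), is SSC, regardless of the choice of $k$ and $l$.
   Context: Network model: a network $\mathcal G=G^S\cup G^I$ consists of an undirected simple state graph $G^S$ on state nodes $\{1,\dots,n\}$ and a set of $m$ external input nodes $u_1,\dots,u_m$, where each input node $u_r$ has exactly one directed edge, to a state node $v_r$, and the $v_r$ are pairwise distinct; the input matrix is $B=[e_{v_1},\dots,e_{v_m}]\in\mathbb R^{n\times m}$ (standard basis vectors). The dynamics are $\dot x=Mx+Bu$, where $M$ ranges over the family $Q(G^S)$ of symmetric matrices with $M_{ij}=a_{ij}>0$ if $\{i,j\}$ is an edge of $G^S$, $M_{ij}=0$ if $i\ne j$ are non-adjacent, and $M_{ii}=-\sum_{j\in\mathcal N_i}a_{ij}+a_{ii}$ with an arbitrary self-loop weight $a_{ii}<0$ ($\mathcal N_i$ the neighbours of $i$ in $G^S$). The network is strongly structurally controllable (SSC) if for every $M\in Q(G^S)$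 the controllability matrix $[B,MB,\dots,M^{n-1}B]$ has rank $n$. A bridge graph between two vertex-disjoint state graphs is a set of edges each joining a node of one to a node of the other, such that every node is incident to at most one bridge edge. *)

theory Defs
  imports Complex_Main
begin

text \<open>Vectors in R^V are functions 'a \<Rightarrow> real (only values on V matter);
  matrices in R^{V x V} are functions 'a \<Rightarrow> 'a \<Rightarrow> real.\<close>

definition state_graph :: "'a set \<Rightarrow> ('a \<Rightarrow> 'a \<Rightarrow> bool) \<Rightarrow> bool" where
  "state_graph V E \<longleftrightarrow> finite V \<and>
     (\<forall>i j. E i j \<longrightarrow> i \<in> V \<and> j \<in> V \<and> i \<noteq> j \<and> E j i)"

definition network :: "'a set \<Rightarrow> ('a \<Rightarrow> 'a \<Rightarrow> bool) \<Rightarrow> 'b set \<Rightarrow> ('b \<Rightarrow> 'a) \<Rightarrow> bool" where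
  "network V E I att \<longleftrightarrow> state_graph V E \<and> finite I \<and> att ` I \<subseteq> V \<and> inj_on att I"

definition in_Q :: "'a set \<Rightarrow> ('a \<Rightarrow> 'a \<Rightarrow> bool) \<Rightarrow> ('a \<Rightarrow> 'a \<Rightarrow> real) \<Rightarrow> bool" where
  "in_Q V E M \<longleftrightarrow>
     (\<forall>i\<in>V. \<forall>j\<in>V. M i j = M j i) \<and>
     (\<forall>i\<in>V. \<forall>j\<in>V. i \<noteq> j \<longrightarrow> (E i j \<longrightarrow> M i j > 0) \<and> (\<not> E i j \<longrightarrow> M i j = 0)) \<and>
     (\<forall>i\<in>V. \<exists>a. a < 0 \<and> M i i = - (\<Sum>j\<in>{j\<in>V. E i j}. M i j) + a)"

definition mat_vec :: "'a set \<Rightarrow> ('a \<Rightarrow> 'a \<Rightarrow> real) \<Rightarrow> ('a \<Rightarrow> real) \<Rightarrow> ('a \<Rightarrow> real)" where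
  "mat_vec V M x = (\<lambda>i. \<Sum>j\<in>V. M i j * x j)"

definition unit_vec :: "'a \<Rightarrow> ('a \<Rightarrow> real)" where
  "unit_vec v = (\<lambda>j. if j = v then 1 else 0)"

text \<open>Column (r,k) of the controllability matrix [B, MB, ..., M^{n-1}B]: M^k e_{att r}.
  The matrix has rank n = card V iff its column space is all of R^V.\<close>
definition controllable :: "'a set \<Rightarrow> ('a \<Rightarrow> 'a \<Rightarrow> real) \<Rightarrow> 'b set \<Rightarrow> ('b \<Rightarrow> 'a) \<Rightarrow> bool" where
  "controllable V M I att \<longleftrightarrow>
     (\<forall>x :: 'a \<Rightarrow> real. \<exists>c :: 'b \<Rightarrow> nat \<Rightarrow> real. \<forall>i\<in>V.
        x i = (\<Sum>r\<in>I. \<Sum>k<card V. c r k * ((mat_vec V M ^^ k) (unit_vec (att r))) i))"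

definition SSC :: "'a set \<Rightarrow> ('a \<Rightarrow> 'a \<Rightarrow> bool) \<Rightarrow> 'b set \<Rightarrow> ('b \<Rightarrow> 'a) \<Rightarrow> bool" where
  "SSC V E I att \<longleftrightarrow> (\<forall>M. in_Q V E M \<longrightarrow> controllable V M I att)"

end

theory Submission
  imports Defs "HOL-Analysis.Analysis"
begin


definition ip :: "'a set \<Rightarrow> ('a \<Rightarrow> real) \<Rightarrow> ('a \<Rightarrow> real) \<Rightarrow> real" where
  "ip V x y = (\<Sum>i\<in>V. x i * y i)"

definition lin :: "'j set \<Rightarrow> ('j \<Rightarrow> real) \<Rightarrow> ('j \<Rightarrow> 'a \<Rightarrow> real) \<Rightarrow> 'a \<Rightarrow> real" where
  "lin J c f = (\<lambda>i. \<Sum>j\<in>J. c j * f j i)"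

lemma ip_commute: "ip V x y = ip V y x"
  unfolding ip_def by (simp add: mult.commute)

lemma ip_lin_left: "ip V (lin J c f) y = (\<Sum>j\<in>J. c j * ip V (f j) y)"
  unfolding ip_def lin_def
  by (simp add: sum_distrib_left sum_distrib_right sum.swap[of _ J V] mult.assoc)

lemma ip_lin_right: "ip V y (lin J c f) = (\<Sum>j\<in>J. c j * ip V y (f j))"
  unfolding ip_def lin_def
  by (simp add: sum_distrib_left sum_distrib_right sum.swap[of _ J V] mult.left_commute)

lemma ip_diff_left: "ip V (\<lambda>i. x i - z i) y = ip V x y - ip V z y"
  unfolding ip_def by (simp add: left_diff_distrib sum_subtractf)

lemma ip_diff_right: "ip V y (\<lambda>i. x i - z i) = ip V y x - ip V y z"
  unfolding ip_def by (simp add: right_diff_distrib sum_subtractf)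

lemma ip_add_left: "ip V (\<lambda>i. x i + z i) y = ip V x y + ip V z y"
  unfolding ip_def by (simp add: distrib_right sum.distrib)

lemma ip_add_right: "ip V y (\<lambda>i. x i + z i) = ip V y x + ip V y z"
  unfolding ip_def by (simp add: distrib_left sum.distrib)

lemma ip_scale_left: "ip V (\<lambda>i. a * x i) y = a * ip V x y"
  unfolding ip_def by (simp add: sum_distrib_left mult.assoc)

lemma ip_scale_right: "ip V y (\<lambda>i. a * x i) = a * ip V y x"
  unfolding ip_def by (simp add: sum_distrib_left mult.left_commute)

lemma ip_cong: "(\<And>i. i \<in> V \<Longrightarrow> x i = x' i) \<Longrightarrow> (\<And>i. i \<in> V \<Longrightarrow> y i = y' i) \<Longrightarrow> ip V x y = ip V x' y'"
  unfolding ip_def by (rule sum.cong) auto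

lemma ip_self_nonneg: "ip V x x \<ge> 0"
  unfolding ip_def by (rule sum_nonneg) simp

lemma ip_self_zero: "finite V \<Longrightarrow> ip V x x = 0 \<Longrightarrow> i \<in> V \<Longrightarrow> x i = 0"
  unfolding ip_def using sum_nonneg_eq_0_iff[of V "\<lambda>i. x i * x i"] by auto

lemma ip_self_pos: "finite V \<Longrightarrow> i \<in> V \<Longrightarrow> x i \<noteq> 0 \<Longrightarrow> ip V x x > 0"
  using ip_self_nonneg[of V x] ip_self_zero[of V x i] by force

lemma mv_cong: "(\<And>i. i \<in> V \<Longrightarrow> x i = y i) \<Longrightarrow> mat_vec V M x = mat_vec V M y"
  unfolding mat_vec_def by (intro ext sum.cong) auto

lemma mv_lin: "finite J \<Longrightarrow> mat_vec V M (lin J c f) = lin J c (\<lambda>j. mat_vec V M (f j))"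
  unfolding mat_vec_def lin_def
  by (intro ext) (simp add: sum_distrib_left sum.swap[of _ J V] mult.left_commute)

lemma mv_sym: assumes "\<And>i j. i \<in> V \<Longrightarrow> j \<in> V \<Longrightarrow> M i j = M j i"
  shows "ip V x (mat_vec V M y) = ip V (mat_vec V M x) y"
proof -
  have "ip V x (mat_vec V M y) = (\<Sum>i\<in>V. \<Sum>j\<in>V. x i * M i j * y j)"
    unfolding ip_def mat_vec_def by (simp add: sum_distrib_left mult.assoc)
  also have "\<dots> = (\<Sum>j\<in>V. \<Sum>i\<in>V. x i * M i j * y j)" by (rule sum.swap)
  also have "\<dots> = ip V (mat_vec V M x) y"
    unfolding ip_def mat_vec_def
    by (auto simp: sum_distrib_right assms mult.commute mult.left_commute intro!: sum.cong)
      (simp add: sum_distrib_left assms mult.commute mult.left_commute)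
  finally show ?thesis .
qed

lemma unit_ip: "i \<in> V \<Longrightarrow> finite V \<Longrightarrow> ip V x (unit_vec i) = x i"
  unfolding ip_def unit_vec_def by (simp add: if_distrib cong: if_cong)

lemma proj:
  assumes "finite J" and fV: "finite V"
  shows "\<forall>x. \<exists>c. \<forall>j\<in>J. ip V (\<lambda>i. x i - lin J c f i) (f j) = 0"
  using assms(1)
proof (induction J rule: finite_induct)
  case empty
  then show ?case by simp
next
  case (insert j0 J)
  show ?case
  proof
    fix x
    obtain cx where cx: "\<forall>j\<in>J. ip V (\<lambda>i. x i - lin J cx f i) (f j) = 0" using insert.IH by blast
    obtain cf where cf: "\<forall>j\<in>J. ip V (\<lambda>i. f j0 i - lin J cf f i) (f j) = 0" using insert.IH by blast
    define g where "g = (\<lambda>i. f j0 i - lin J cf f i)"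
    define r where "r = (\<lambda>i. x i - lin J cx f i)"
    have f0: "f j0 = (\<lambda>i. g i + lin J cf f i)" unfolding g_def by auto
    have rJ: "\<forall>j\<in>J. ip V r (f j) = 0" using cx r_def by simp
    have gJ: "\<forall>j\<in>J. ip V g (f j) = 0" using cf g_def by simp
    have r_lin: "ip V r (lin J cf f) = 0" using rJ by (simp add: ip_lin_right)
    have g_lin: "ip V g (lin J cf f) = 0" using gJ by (simp add: ip_lin_right)
    show "\<exists>c. \<forall>j\<in>insert j0 J. ip V (\<lambda>i. x i - lin (insert j0 J) c f i) (f j) = 0"
    proof (cases "ip V g g = 0")
      case True
      define c where "c = cx(j0 := 0)"
      have lc: "lin (insert j0 J) c f = lin J cx f"
        unfolding lin_def c_def using insert.hyps
        by (intro ext) (auto intro!: sum.cong)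
      have rg: "ip V r g = 0"
      proof -
        have "\<forall>i\<in>V. g i = 0" using True ip_self_zero[OF fV] by blast
        then show ?thesis unfolding ip_def by simp
      qed
      show ?thesis
      proof (intro exI ballI)
        fix j assume "j \<in> insert j0 J"
        then show "ip V (\<lambda>i. x i - lin (insert j0 J) c f i) (f j) = 0"
        proof
          assume "j = j0"
          then show ?thesis unfolding lc using rg r_lin
            by (simp add: f0 ip_add_right r_def[symmetric])
        next
          assume "j \<in> J" then show ?thesis unfolding lc using rJ r_def by simp
        qed
      qed
    next
      case False
      define \<alpha> where "\<alpha> = ip V r g / ip V g g"
      define c where "c = (\<lambda>j. if j = j0 then \<alpha> else cx j - \<alpha> * cf j)"
      have lc: "(\<lambda>i. x i - lin (insert j0 J) c f i) = (\<lambda>i. r i - \<alpha> * g i)"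
      proof
        fix i
        have "lin (insert j0 J) c f i = \<alpha> * f j0 i + (\<Sum>j\<in>J. c j * f j i)"
          unfolding lin_def using insert.hyps by (simp add: c_def)
        also have "(\<Sum>j\<in>J. c j * f j i) = (\<Sum>j\<in>J. cx j * f j i - \<alpha> * (cf j * f j i))"
          using insert.hyps by (auto simp: c_def algebra_simps intro!: sum.cong)
        also have "\<dots> = (\<Sum>j\<in>J. cx j * f j i) - \<alpha> * (\<Sum>j\<in>J. cf j * f j i)"
          by (simp add: sum_subtractf sum_distrib_left)
        finally show "x i - lin (insert j0 J) c f i = r i - \<alpha> * g i"
          unfolding r_def g_def lin_def by (simp add: algebra_simps)
      qed
      have rg: "ip V (\<lambda>i. r i - \<alpha> * g i) g = 0"
        using False unfolding ip_diff_left ip_scale_left \<alpha>_def by simp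
      show ?thesis
      proof (intro exI ballI)
        fix j assume "j \<in> insert j0 J"
        then show "ip V (\<lambda>i. x i - lin (insert j0 J) c f i) (f j) = 0"
        proof
          assume "j = j0"
          then show ?thesis unfolding lc using rg r_lin g_lin
            by (simp add: f0 ip_add_right ip_diff_left ip_scale_left)
        next
          assume "j \<in> J" then show ?thesis unfolding lc using rJ gJ
            by (simp add: ip_diff_left ip_scale_left)
        qed
      qed
    qed
  qed
qed

lemma orth_card:
  assumes fV: "finite V" and fT: "finite T"
    and pos: "\<And>t. t \<in> T \<Longrightarrow> ip V (g t) (g t) > 0"
    and orth: "\<And>s t. s \<in> T \<Longrightarrow> t \<in> T \<Longrightarrow> s \<noteq> t \<Longrightarrow> ip V (g s) (g t) = 0"
  shows "card T \<le> card V"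
proof -
  define h where "h t = (\<lambda>i. g t i / sqrt (ip V (g t) (g t)))" for t
  have hh: "ip V (h s) (h t) = (if s = t then 1 else 0)" if "s \<in> T" "t \<in> T" for s t
  proof -
    have "ip V (h s) (h t) = ip V (g s) (g t) / (sqrt (ip V (g s) (g s)) * sqrt (ip V (g t) (g t)))"
      unfolding ip_def h_def by (simp add: sum_divide_distrib)
    then show ?thesis using pos[OF that(1)] pos[OF that(2)] orth[OF that]
      by (cases "s = t") (auto simp del: real_sqrt_mult)
  qed
  have bes: "(\<Sum>t\<in>T. h t i * h t i) \<le> 1" if i: "i \<in> V" for i
  proof -
    define x where "x = unit_vec i"
    define a where "a t = h t i" for t
    define L where "L = lin T a h"
    have xh: "ip V x (h t) = a t" for t unfolding x_def a_def
      by (simp add: ip_commute[of V "unit_vec i"] unit_ip[OF i fV])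
    have hx: "ip V (h t) x = a t" for t using xh by (simp add: ip_commute)
    have xL: "ip V x L = (\<Sum>t\<in>T. a t * a t)" unfolding L_def ip_lin_right xh ..
    have Lx: "ip V L x = (\<Sum>t\<in>T. a t * a t)" using xL by (simp add: ip_commute)
    have LL: "ip V L L = (\<Sum>t\<in>T. a t * a t)"
    proof -
      have "ip V L L = (\<Sum>s\<in>T. a s * (\<Sum>t\<in>T. a t * ip V (h s) (h t)))"
        unfolding L_def ip_lin_left by (simp add: ip_lin_right)
      also have "\<dots> = (\<Sum>s\<in>T. a s * a s)"
      proof (rule sum.cong[OF refl])
        fix s assume s: "s \<in> T"
        have "(\<Sum>t\<in>T. a t * ip V (h s) (h t)) = (\<Sum>t\<in>T. if s = t then a t else 0)"
          using hh[OF s] by (intro sum.cong) auto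
        also have "\<dots> = a s" using s fT by simp
        finally show "a s * (\<Sum>t\<in>T. a t * ip V (h s) (h t)) = a s * a s" by simp
      qed
      finally show ?thesis .
    qed
    have xx: "ip V x x = 1" unfolding x_def using unit_ip[OF i fV] by (simp add: unit_vec_def)
    have "0 \<le> ip V (\<lambda>j. x j - L j) (\<lambda>j. x j - L j)" by (rule ip_self_nonneg)
    also have "\<dots> = ip V x x - ip V x L - (ip V L x - ip V L L)"
      by (simp add: ip_diff_left ip_diff_right)
    finally show ?thesis using xL Lx LL xx by (simp add: a_def)
  qed
  have "card T = (\<Sum>t\<in>T. ip V (h t) (h t))" using hh by simp
  also have "\<dots> = (\<Sum>i\<in>V. \<Sum>t\<in>T. h t i * h t i)" unfolding ip_def by (rule sum.swap)
  also have "\<dots> \<le> (\<Sum>i\<in>V. 1)" by (rule sum_mono) (rule bes)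
  finally show ?thesis by simp
qed

lemma lin_diff: "lin J (\<lambda>j. c1 j - c2 j) f i = lin J c1 f i - lin J c2 f i"
  unfolding lin_def by (simp add: left_diff_distrib sum_subtractf)

context
  fixes V :: "'a set" and M :: "'a \<Rightarrow> 'a \<Rightarrow> real" and I :: "'b set" and b :: "'b \<Rightarrow> 'a \<Rightarrow> real"
  assumes fV: "finite V" and fI: "finite I"
begin

definition FF :: "'b \<times> nat \<Rightarrow> 'a \<Rightarrow> real" where
  "FF p = (mat_vec V M ^^ snd p) (b (fst p))"

definition KS :: "nat \<Rightarrow> ('a \<Rightarrow> real) \<Rightarrow> bool" where
  "KS m x \<longleftrightarrow> (\<exists>c. \<forall>i\<in>V. x i = lin (I \<times> {..<m}) c FF i)"

lemma KS_gen: "p \<in> I \<times> {..<m} \<Longrightarrow> KS m (FF p)"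
  unfolding KS_def lin_def
proof (intro exI ballI)
  fix i assume "p \<in> I \<times> {..<m}"
  then show "FF p i = (\<Sum>q\<in>I \<times> {..<m}. (if q = p then 1 else 0) * FF q i)"
    using fI by (simp add: if_distrib[of "\<lambda>x. x * _"] cong: if_cong)
qed

lemma KS_lin_trivial: "KS m (lin (I \<times> {..<m}) c FF)"
  unfolding KS_def by blast

lemma KS_cong: "KS m x \<Longrightarrow> (\<And>i. i \<in> V \<Longrightarrow> x i = y i) \<Longrightarrow> KS m y"
  unfolding KS_def by auto

lemma KS_lin:
  assumes fJ: "finite J" and g: "\<And>j. j \<in> J \<Longrightarrow> KS m (g j)"
  shows "KS m (lin J d g)"
proof -
  from g have "\<forall>j\<in>J. \<exists>c. \<forall>i\<in>V. g j i = lin (I \<times> {..<m}) c FF i" unfolding KS_def by blast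
  then obtain C where C: "\<And>j i. j \<in> J \<Longrightarrow> i \<in> V \<Longrightarrow> g j i = lin (I \<times> {..<m}) (C j) FF i"
    by metis
  show ?thesis unfolding KS_def
  proof (intro exI ballI)
    fix i assume i: "i \<in> V"
    have "lin J d g i = (\<Sum>j\<in>J. d j * (\<Sum>p\<in>I \<times> {..<m}. C j p * FF p i))"
      unfolding lin_def using C[OF _ i] by (auto simp: lin_def intro!: sum.cong)
    also have "\<dots> = (\<Sum>p\<in>I \<times> {..<m}. (\<Sum>j\<in>J. d j * C j p) * FF p i)"
      by (simp add: sum_distrib_left sum_distrib_right sum.swap[of _ J] mult.assoc)
    finally show "lin J d g i = lin (I \<times> {..<m}) (\<lambda>p. \<Sum>j\<in>J. d j * C j p) FF i"
      by (simp add: lin_def)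
  qed
qed

lemma KS_diff: "KS m x \<Longrightarrow> KS m y \<Longrightarrow> KS m (\<lambda>i. x i - y i)"
proof -
  assume "KS m x" "KS m y"
  then obtain c1 c2 where "\<forall>i\<in>V. x i = lin (I \<times> {..<m}) c1 FF i" "\<forall>i\<in>V. y i = lin (I \<times> {..<m}) c2 FF i"
    unfolding KS_def by blast
  then show ?thesis unfolding KS_def using lin_diff[of "I \<times> {..<m}" c1 c2 FF]
    by (intro exI[of _ "\<lambda>j. c1 j - c2 j"]) auto
qed

lemma KS_mono:
  assumes "m \<le> m'" "KS m x" shows "KS m' x"
proof -
  obtain c where c: "\<forall>i\<in>V. x i = lin (I \<times> {..<m}) c FF i" using assms(2) KS_def by blast
  show ?thesis unfolding KS_def
  proof (intro exI ballI)
    fix i assume "i \<in> V"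
    have "lin (I \<times> {..<m'}) (\<lambda>p. if snd p < m then c p else 0) FF i = lin (I \<times> {..<m}) c FF i"
      unfolding lin_def using assms(1) fI
      by (intro sum.mono_neutral_cong_right) auto
    then show "x i = lin (I \<times> {..<m'}) (\<lambda>p. if snd p < m then c p else 0) FF i"
      using c \<open>i \<in> V\<close> by simp
  qed
qed

lemma FF_Suc: "mat_vec V M (FF (r, k)) = FF (r, Suc k)"
  unfolding FF_def by simp

lemma KS_shift:
  assumes "KS m x" shows "KS (Suc m) (mat_vec V M x)"
proof -
  obtain c where c: "\<forall>i\<in>V. x i = lin (I \<times> {..<m}) c FF i" using assms KS_def by blast
  have "mat_vec V M x = mat_vec V M (lin (I \<times> {..<m}) c FF)" using c by (intro mv_cong) auto
  also have "\<dots> = lin (I \<times> {..<m}) c (\<lambda>p. mat_vec V M (FF p))" by (rule mv_lin) (simp add: fI)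
  finally have eq: "mat_vec V M x = lin (I \<times> {..<m}) c (\<lambda>p. mat_vec V M (FF p))" .
  have "KS (Suc m) (lin (I \<times> {..<m}) c (\<lambda>p. mat_vec V M (FF p)))"
  proof (rule KS_lin)
    fix p assume "p \<in> I \<times> {..<m}"
    then show "KS (Suc m) (mat_vec V M (FF p))"
      using KS_gen[of "(fst p, Suc (snd p))" "Suc m"] FF_Suc[of "fst p" "snd p"] by auto
  qed (simp add: fI)
  then show ?thesis using eq by simp
qed

lemma KS_down:
  assumes h: "\<forall>r\<in>I. KS m (FF (r, m))" and x: "KS (Suc m) x" shows "KS m x"
proof -
  obtain c where c: "\<forall>i\<in>V. x i = lin (I \<times> {..<Suc m}) c FF i" using x KS_def by blast
  have "KS m (lin (I \<times> {..<Suc m}) c FF)"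
  proof (rule KS_lin)
    fix p assume p: "p \<in> I \<times> {..<Suc m}"
    show "KS m (FF p)"
    proof (cases "snd p < m")
      case True then show ?thesis using p KS_gen[of p m] by auto
    next
      case False then have "snd p = m" using p by auto
      then show ?thesis using h p by (cases p) auto
    qed
  qed (simp add: fI)
  then show ?thesis using c KS_cong by auto
qed

lemma KS_stab:
  assumes h: "\<forall>r\<in>I. KS m (FF (r, m))" shows "\<forall>r\<in>I. KS m (FF (r, m + d))"
proof (induction d)
  case 0 then show ?case using h by simp
next
  case (Suc d)
  show ?case
  proof
    fix r assume r: "r \<in> I"
    have "KS (Suc m) (mat_vec V M (FF (r, m + d)))" using Suc r KS_shift by blast
    then have "KS m (mat_vec V M (FF (r, m + d)))" using KS_down[OF h] by blast
    then show "KS m (FF (r, m + Suc d))" using FF_Suc by simp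
  qed
qed

lemma KS_exists: "\<exists>m\<le>card V. \<forall>r\<in>I. KS m (FF (r, m))"
proof (rule ccontr)
  assume "\<not> ?thesis"
  then have "\<forall>m. \<exists>r. m \<le> card V \<longrightarrow> r \<in> I \<and> \<not> KS m (FF (r, m))" by auto
  then obtain R where R: "\<And>m. m \<le> card V \<Longrightarrow> R m \<in> I \<and> \<not> KS m (FF (R m, m))" by metis
  have "\<forall>m. \<exists>c. \<forall>p\<in>I \<times> {..<m}. ip V (\<lambda>i. FF (R m, m) i - lin (I \<times> {..<m}) c FF i) (FF p) = 0"
    using proj[of "I \<times> {..<_}" V FF] fI fV by blast
  then obtain C where C: "\<And>m p. p \<in> I \<times> {..<m} \<Longrightarrow>
      ip V (\<lambda>i. FF (R m, m) i - lin (I \<times> {..<m}) (C m) FF i) (FF p) = 0" by metis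
  define g where "g m = (\<lambda>i. FF (R m, m) i - lin (I \<times> {..<m}) (C m) FF i)" for m
  have orth: "ip V (g m) y = 0" if ky: "KS m y" for m y
  proof -
    obtain c where c: "\<forall>i\<in>V. y i = lin (I \<times> {..<m}) c FF i" using ky KS_def by blast
    have "ip V (g m) y = ip V (g m) (lin (I \<times> {..<m}) c FF)" using c by (intro ip_cong) auto
    also have "\<dots> = 0" unfolding ip_lin_right using C g_def by simp
    finally show ?thesis .
  qed
  have gKS: "KS (Suc m) (g m)" if "m \<le> card V" for m
    unfolding g_def
    by (rule KS_diff) (use R[OF that] KS_gen[of "(R m, m)" "Suc m"] KS_mono[OF _ KS_lin_trivial, of m "Suc m"] in auto)
  have gpos: "ip V (g m) (g m) > 0" if "m \<le> card V" for m
  proof -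
    have "\<exists>i\<in>V. g m i \<noteq> 0"
    proof (rule ccontr)
      assume "\<not> ?thesis"
      then have "\<forall>i\<in>V. FF (R m, m) i = lin (I \<times> {..<m}) (C m) FF i" by (auto simp: g_def)
      then have "KS m (FF (R m, m))" unfolding KS_def by blast
      then show False using R[OF that] by blast
    qed
    then show ?thesis using ip_self_pos[OF fV] by blast
  qed
  have "card {..card V} \<le> card V"
  proof (rule orth_card[OF fV, of _ g])
    fix s t assume st: "s \<in> {..card V}" "t \<in> {..card V}" "s \<noteq> t"
    show "ip V (g s) (g t) = 0"
    proof (cases "s < t")
      case True
      then have "KS t (g s)" using gKS[of s] st KS_mono[of "Suc s" t] by auto
      then show ?thesis using orth[of t "g s"] by (simp add: ip_commute)
    next
      case False
      then have "KS s (g t)" using gKS[of t] st KS_mono[of "Suc t" s] by auto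
      then show ?thesis using orth[of s "g t"] by simp
    qed
  qed (use gpos in auto)
  then show False by simp
qed

lemma KS_all: "r \<in> I \<Longrightarrow> KS (card V) (FF (r, k))"
proof -
  assume r: "r \<in> I"
  obtain m where m: "m \<le> card V" "\<forall>r\<in>I. KS m (FF (r, m))" using KS_exists by blast
  have "KS m (FF (r, k))"
  proof (cases "k < m")
    case True then show ?thesis using KS_gen r by auto
  next
    case False
    then obtain d where "k = m + d" using le_Suc_ex not_less by blast
    then show ?thesis using KS_stab[OF m(2)] r by auto
  qed
  then show ?thesis using KS_mono m(1) by blast
qed

end



lemma mv_add_scale: "mat_vec V M (\<lambda>i. x i + a * y i) = (\<lambda>i. mat_vec V M x i + a * mat_vec V M y i)"
  unfolding mat_vec_def by (simp add: distrib_left sum.distrib sum_distrib_left mult.left_commute)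

lemma mv_scale: "mat_vec V M (\<lambda>i. a * y i) = (\<lambda>i. a * mat_vec V M y i)"
  unfolding mat_vec_def by (simp add: sum_distrib_left mult.left_commute)

lemma cont_ip: "continuous_on UNIV (\<lambda>v::'a \<Rightarrow> real. ip V v v)"
  unfolding ip_def by (intro continuous_on_sum continuous_on_mult continuous_on_product_coordinates)

lemma cont_q: "continuous_on UNIV (\<lambda>v::'a \<Rightarrow> real. ip V v (mat_vec V M v))"
  unfolding ip_def mat_vec_def
  by (intro continuous_on_sum continuous_on_mult continuous_on_product_coordinates continuous_on_const)

lemma sq_le_1: "(x::real) * x \<le> 1 \<Longrightarrow> x \<in> {-1..1}"
proof -
  assume "x * x \<le> 1"
  then have "\<bar>x\<bar> \<le> 1" using abs_le_square_iff[of x 1] by (simp add: power2_eq_square)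
  then show ?thesis by auto
qed

lemma compact_box:
  fixes V :: "'a set"
  shows "compact (PiE UNIV (\<lambda>i. if i \<in> V then {-1..1::real} else {0}))"
proof -
  have "compactin (product_topology (\<lambda>i. euclidean) UNIV) (PiE UNIV (\<lambda>i. if i \<in> V then {-1..1::real} else {0}))"
    by (subst compactin_PiE) (auto simp: compactin_euclidean_iff)
  then show ?thesis by (simp add: euclidean_product_topology compactin_euclidean_iff)
qed

lemma eigen_exists:
  fixes V :: "'a set" and M :: "'a \<Rightarrow> 'a \<Rightarrow> real" and P :: "('a \<Rightarrow> real) \<Rightarrow> bool"
  assumes fV: "finite V" and sym: "\<And>i j. i \<in> V \<Longrightarrow> j \<in> V \<Longrightarrow> M i j = M j i"
    and P0: "\<And>v i. P v \<Longrightarrow> i \<notin> V \<Longrightarrow> v i = 0"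
    and Padd: "\<And>v w. P v \<Longrightarrow> P w \<Longrightarrow> P (\<lambda>i. v i + w i)"
    and Pscale: "\<And>a v. P v \<Longrightarrow> P (\<lambda>i. a * v i)"
    and PM: "\<And>v. P v \<Longrightarrow> P (\<lambda>i. if i \<in> V then mat_vec V M v i else 0)"
    and Pcl: "closed {v. P v}"
    and Pu: "P u" and i0: "i0 \<in> V" "u i0 \<noteq> 0"
  shows "\<exists>w lam. P w \<and> (\<exists>i\<in>V. w i \<noteq> 0) \<and> (\<forall>i\<in>V. mat_vec V M w i = lam * w i)"
proof -
  define q where "q v = ip V v (mat_vec V M v)" for v
  define C where "C = {v. P v} \<inter> {v. ip V v v = 1}"
  define Bx where "Bx = PiE UNIV (\<lambda>i. if i \<in> V then {-1..1::real} else {0})"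
  have CB: "C \<subseteq> Bx"
  proof
    fix v assume v: "v \<in> C"
    have "v i \<in> (if i \<in> V then {-1..1} else {0})" for i
    proof (cases "i \<in> V")
      case True
      have "v i * v i \<le> (\<Sum>j\<in>V. v j * v j)"
        by (rule member_le_sum[OF True _ fV]) simp
      also have "\<dots> = 1" using v by (simp add: C_def ip_def)
      finally have "v i \<in> {-1..1}" by (rule sq_le_1)
      then show ?thesis using True by simp
    next
      case False then show ?thesis using v P0 by (auto simp: C_def)
    qed
    then show "v \<in> Bx" unfolding Bx_def by auto
  qed
  have clC: "closed C" unfolding C_def
    by (intro closed_Int Pcl closed_Collect_eq cont_ip continuous_on_const)
  have cC: "compact C"
  proof -
    have "compact (Bx \<inter> C)" unfolding Bx_def by (rule compact_Int_closed[OF compact_box clC])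
    moreover have "Bx \<inter> C = C" using CB by auto
    ultimately show ?thesis by simp
  qed
  have uu: "ip V u u > 0" using ip_self_pos[OF fV, of i0 u] i0 by blast
  define a0 where "a0 = 1 / sqrt (ip V u u)"
  define y where "y = (\<lambda>i. a0 * u i)"
  have "a0 * (a0 * ip V u u) = 1" unfolding a0_def using uu
    by (simp add: power2_eq_square[symmetric])
  moreover have "ip V y y = a0 * (a0 * ip V u u)" unfolding y_def
    by (subst ip_scale_left, subst ip_scale_right, rule refl)
  ultimately have "y \<in> C" unfolding C_def using Pscale[OF Pu] y_def by simp
  then have neC: "C \<noteq> {}" by auto
  have contq: "continuous_on C q" unfolding q_def using cont_q continuous_on_subset by blast
  obtain v where vC: "v \<in> C" and vmax: "\<And>z. z \<in> C \<Longrightarrow> q z \<le> q v"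
    using continuous_attains_sup[OF cC neC contq] by blast
  define lam where "lam = q v"
  have Pv: "P v" and vv: "ip V v v = 1" using vC by (auto simp: C_def)
  have bound: "q z \<le> lam * ip V z z" if Pz: "P z" for z
  proof (cases "ip V z z = 0")
    case True
    then have "\<forall>i\<in>V. z i = 0" using ip_self_zero[OF fV] by blast
    then have "q z = 0" unfolding q_def ip_def by simp
    then show ?thesis using True by simp
  next
    case False
    then have zpos: "ip V z z > 0" using ip_self_nonneg[of V z] by linarith
    define a where "a = 1 / sqrt (ip V z z)"
    have a2: "a * a = 1 / ip V z z" unfolding a_def using zpos
      by (simp add: power_divide power2_eq_square[symmetric])
    have "(\<lambda>i. a * z i) \<in> C" unfolding C_def using Pscale[OF Pz] a2 zpos
      by (simp add: ip_scale_left ip_scale_right mult.assoc[symmetric])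
    then have "q (\<lambda>i. a * z i) \<le> lam" using vmax lam_def by blast
    moreover have "q (\<lambda>i. a * z i) = q z / ip V z z"
      unfolding q_def mv_scale ip_scale_left ip_scale_right using a2
      by (simp add: mult.assoc[symmetric])
    ultimately show ?thesis using zpos by (simp add: divide_le_eq mult.commute)
  qed
  define w where "w = (\<lambda>i. (if i \<in> V then mat_vec V M v i else 0) + (- lam) * v i)"
  have Pw: "P w" unfolding w_def by (intro Padd Pscale PM Pv)
  have wV: "w i = mat_vec V M v i - lam * v i" if "i \<in> V" for i
    using that w_def by simp
  have vw: "ip V v w = 0"
  proof -
    have "ip V v w = ip V v (\<lambda>i. mat_vec V M v i - lam * v i)" by (rule ip_cong) (auto simp: wV)
    also have "\<dots> = q v - lam * ip V v v" by (simp add: ip_diff_right ip_scale_right q_def)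
    finally show ?thesis using vv lam_def by simp
  qed
  have w0: "\<forall>i\<in>V. w i = 0"
  proof (rule ccontr)
    assume "\<not> ?thesis"
    then obtain i where "i \<in> V" "w i \<noteq> 0" by auto
    then have spos: "ip V w w > 0" using ip_self_pos[OF fV] by blast
    define s where "s = ip V w w"
    have wMv: "ip V w (mat_vec V M v) = s"
    proof -
      have "ip V w (mat_vec V M v) = ip V w (\<lambda>i. w i + lam * v i)" by (rule ip_cong) (auto simp: wV)
      also have "\<dots> = s" using vw ip_commute[of V w v] by (simp add: ip_add_right ip_scale_right s_def)
      finally show ?thesis .
    qed
    have vMw: "ip V v (mat_vec V M w) = s" using wMv mv_sym[of V M v w, OF sym] ip_commute[of V "mat_vec V M v" w] by simp
    define K where "K = \<bar>q w - lam * s\<bar> + 1"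
    have Kpos: "K > 0" unfolding K_def by simp
    define e where "e = s / K"
    have epos: "e > 0" unfolding e_def using spos Kpos s_def by simp
    define z where "z = (\<lambda>i. v i + e * w i)"
    have Pz: "P z" unfolding z_def by (intro Padd Pscale Pv Pw)
    have zz: "ip V z z = 1 + e * e * s"
      unfolding z_def using vv vw by (simp add: ip_add_left ip_add_right ip_scale_left ip_scale_right ip_commute[of V w v] s_def)
    have qz: "q z = lam + 2 * e * s + e * e * q w"
      unfolding z_def q_def mv_add_scale using wMv vMw lam_def q_def
      by (simp add: ip_add_left ip_add_right ip_scale_left ip_scale_right algebra_simps)
    have "lam + 2 * e * s + e * e * q w \<le> lam * (1 + e * e * s)" using bound[OF Pz] qz zz by simp
    then have "e * (2 * s) \<le> e * (e * (lam * s - q w))" by (simp add: algebra_simps)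
    then have "2 * s \<le> e * (lam * s - q w)" using epos by simp
    also have "\<dots> \<le> e * \<bar>q w - lam * s\<bar>" using epos by (intro mult_left_mono) auto
    also have "\<dots> < e * K" using epos unfolding K_def by simp
    also have "e * K = s" unfolding e_def using Kpos by simp
    finally show False using spos s_def by simp
  qed
  have "\<exists>i\<in>V. v i \<noteq> 0"
  proof (rule ccontr)
    assume "\<not> ?thesis" then have "ip V v v = 0" unfolding ip_def by simp
    then show False using vv by simp
  qed
  moreover have "\<forall>i\<in>V. mat_vec V M v i = lam * v i" using w0 wV by simp
  ultimately show ?thesis using Pv by blast
qed

lemma eig_zero:
  assumes fV: "finite Vs" and sym: "\<And>i j. i \<in> Vs \<Longrightarrow> j \<in> Vs \<Longrightarrow> M i j = M j i"
    and ctrl: "controllable Vs M Is att" and attI: "att ` Is \<subseteq> Vs"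
    and w0: "\<forall>r\<in>Is. w (att r) = 0"
    and eig: "\<forall>i\<in>Vs. mat_vec Vs M w i = mu * w i"
  shows "\<forall>i\<in>Vs. w i = 0"
proof -
  have pk: "ip Vs w ((mat_vec Vs M ^^ k) e) = mu ^ k * ip Vs w e" for k e
  proof (induction k)
    case 0 then show ?case by simp
  next
    case (Suc k)
    have "ip Vs w ((mat_vec Vs M ^^ Suc k) e) = ip Vs w (mat_vec Vs M ((mat_vec Vs M ^^ k) e))" by simp
    also have "\<dots> = ip Vs (mat_vec Vs M w) ((mat_vec Vs M ^^ k) e)" by (rule mv_sym[of Vs M, OF sym])
    also have "\<dots> = ip Vs (\<lambda>i. mu * w i) ((mat_vec Vs M ^^ k) e)" by (rule ip_cong) (use eig in auto)
    also have "\<dots> = mu * ip Vs w ((mat_vec Vs M ^^ k) e)" by (rule ip_scale_left)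
    finally show ?case using Suc by simp
  qed
  have z: "ip Vs w ((mat_vec Vs M ^^ k) (unit_vec (att r))) = 0" if r: "r \<in> Is" for r k
  proof -
    have "att r \<in> Vs" using attI r by auto
    then have "ip Vs w (unit_vec (att r)) = 0" using unit_ip[OF _ fV] w0 r by simp
    then show ?thesis using pk by simp
  qed
  obtain c where c: "\<forall>i\<in>Vs. w i = (\<Sum>r\<in>Is. \<Sum>k<card Vs. c r k * ((mat_vec Vs M ^^ k) (unit_vec (att r))) i)"
    using ctrl unfolding controllable_def by blast
  define F where "F r k = (mat_vec Vs M ^^ k) (unit_vec (att r))" for r k
  have "ip Vs w w = (\<Sum>i\<in>Vs. w i * (\<Sum>r\<in>Is. \<Sum>k<card Vs. c r k * F r k i))"
    unfolding ip_def F_def using c by (intro sum.cong) auto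
  also have "\<dots> = (\<Sum>i\<in>Vs. \<Sum>r\<in>Is. \<Sum>k<card Vs. c r k * (w i * F r k i))"
    by (simp add: sum_distrib_left mult.left_commute)
  also have "\<dots> = (\<Sum>r\<in>Is. \<Sum>i\<in>Vs. \<Sum>k<card Vs. c r k * (w i * F r k i))" by (rule sum.swap)
  also have "\<dots> = (\<Sum>r\<in>Is. \<Sum>k<card Vs. \<Sum>i\<in>Vs. c r k * (w i * F r k i))"
    by (intro sum.cong refl sum.swap)
  also have "\<dots> = (\<Sum>r\<in>Is. \<Sum>k<card Vs. c r k * ip Vs w (F r k))"
    by (simp add: ip_def sum_distrib_left)
  also have "\<dots> = 0" using z unfolding F_def by simp
  finally show ?thesis using ip_self_zero[OF fV] by blast
qed

lemma side:
  fixes M :: "'a \<Rightarrow> 'a \<Rightarrow> real" and s lam :: real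
  assumes net: "network Vs Es Is att" and ssc: "SSC Vs Es Is att" and k: "k \<in> Vs"
    and sym: "\<And>i j. i \<in> Vs \<Longrightarrow> j \<in> Vs \<Longrightarrow> M i j = M j i"
    and off: "\<And>i j. i \<in> Vs \<Longrightarrow> j \<in> Vs \<Longrightarrow> i \<noteq> j \<Longrightarrow> (Es i j \<longrightarrow> M i j > 0) \<and> (\<not> Es i j \<longrightarrow> M i j = 0)"
    and w0: "\<forall>r\<in>Is. w (att r) = 0"
    and eq: "\<forall>i\<in>Vs. (\<Sum>j\<in>Vs. M i j * w j) + (if i = k then s else 0) = lam * w i"
    and alt: "w k \<noteq> 0 \<or> s = 0"
  shows "\<forall>i\<in>Vs. w i = 0"
proof -
  have fV: "finite Vs" and irr: "\<And>i j. Es i j \<Longrightarrow> i \<noteq> j" and attI: "att ` Is \<subseteq> Vs"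
    using net unfolding network_def state_graph_def by auto
  define t where "t = (if w k = 0 then 0 else s / w k)"
  have st: "s = t * w k" using alt unfolding t_def by auto
  define D where "D i = (if i = k then t else 0)" for i
  define S where "S i = (\<Sum>j\<in>{j\<in>Vs. Es i j}. M i j)" for i
  define cc where "cc = 1 + (\<Sum>i\<in>Vs. \<bar>M i i + D i + S i\<bar>)"
  define M2 where "M2 i j = (if i = j then M i i + D i - cc else M i j)" for i j
  have S2: "(\<Sum>j\<in>{j\<in>Vs. Es i j}. M2 i j) = S i" for i
    unfolding S_def M2_def using irr by (intro sum.cong) auto
  have inQ: "in_Q Vs Es M2"
    unfolding in_Q_def
  proof (intro conjI ballI impI)
    fix i j assume "i \<in> Vs" "j \<in> Vs"
    then show "M2 i j = M2 j i" unfolding M2_def using sym by auto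
  next
    fix i j assume "i \<in> Vs" "j \<in> Vs" "i \<noteq> j" "Es i j"
    then show "M2 i j > 0" unfolding M2_def using off by auto
  next
    fix i j assume "i \<in> Vs" "j \<in> Vs" "i \<noteq> j" "\<not> Es i j"
    then show "M2 i j = 0" unfolding M2_def using off by auto
  next
    fix i assume i: "i \<in> Vs"
    have "\<bar>M i i + D i + S i\<bar> \<le> (\<Sum>i\<in>Vs. \<bar>M i i + D i + S i\<bar>)"
      by (rule member_le_sum[OF i _ fV]) simp
    then have neg: "M2 i i + S i < 0" unfolding M2_def cc_def by simp
    show "\<exists>a<0. M2 i i = - (\<Sum>j\<in>{j\<in>Vs. Es i j}. M2 i j) + a"
      by (rule exI[of _ "M2 i i + S i"]) (use neg S2 in simp)
  qed
  have ctrl: "controllable Vs M2 Is att" using ssc inQ unfolding SSC_def by blast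
  have eig: "\<forall>i\<in>Vs. mat_vec Vs M2 w i = (lam - cc) * w i"
  proof
    fix i assume i: "i \<in> Vs"
    have "mat_vec Vs M2 w i = (\<Sum>j\<in>Vs. M i j * w j + (if j = i then (D i - cc) * w j else 0))"
      unfolding mat_vec_def M2_def by (intro sum.cong) (auto simp: algebra_simps)
    also have "\<dots> = (\<Sum>j\<in>Vs. M i j * w j) + (D i - cc) * w i"
      using i fV by (simp add: sum.distrib)
    also have "\<dots> = (lam - cc) * w i"
      using eq i st unfolding D_def by (auto simp: algebra_simps)
    finally show "mat_vec Vs M2 w i = (lam - cc) * w i" .
  qed
  have sym2: "\<And>i j. i \<in> Vs \<Longrightarrow> j \<in> Vs \<Longrightarrow> M2 i j = M2 j i"
    using inQ unfolding in_Q_def by blast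
  show ?thesis by (rule eig_zero[OF fV sym2 ctrl attI w0 eig])
qed

lemma ctrl_crit:
  assumes fV: "finite V" and fI: "finite I" and att: "att ` I \<subseteq> V"
    and obs: "\<And>v. (\<forall>r\<in>I. \<forall>k. ip V v ((mat_vec V M ^^ k) (unit_vec (att r))) = 0) \<Longrightarrow> (\<forall>i\<in>V. v i = 0)"
  shows "controllable V M I att"
  unfolding controllable_def
proof
  fix x :: "'a \<Rightarrow> real"
  define b where "b r = unit_vec (att r)" for r
  define n where "n = card V"
  define F where "F = FF V M b"
  obtain c where c: "\<forall>p\<in>I \<times> {..<n}. ip V (\<lambda>i. x i - lin (I \<times> {..<n}) c F i) (F p) = 0"
    using proj[of "I \<times> {..<n}" V F] fI fV by blast
  define w where "w = (\<lambda>i. x i - lin (I \<times> {..<n}) c F i)"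
  have "\<forall>r\<in>I. \<forall>k. ip V w ((mat_vec V M ^^ k) (unit_vec (att r))) = 0"
  proof (intro ballI allI)
    fix r k assume r: "r \<in> I"
    have "KS V M I b n (FF V M b (r, k))" using KS_all[OF fV fI r] n_def by simp
    then obtain d where d: "\<forall>i\<in>V. F (r, k) i = lin (I \<times> {..<n}) d F i"
      unfolding KS_def[OF fV fI] F_def by blast
    have "ip V w (F (r, k)) = ip V w (lin (I \<times> {..<n}) d F)" using d by (intro ip_cong) auto
    also have "\<dots> = 0" unfolding ip_lin_right using c w_def by (intro sum.neutral) auto
    finally show "ip V w ((mat_vec V M ^^ k) (unit_vec (att r))) = 0"
      by (simp add: F_def FF_def[OF fV fI] b_def)
  qed
  then have w0: "\<forall>i\<in>V. w i = 0" using obs by blast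
  show "\<exists>c. \<forall>i\<in>V. x i = (\<Sum>r\<in>I. \<Sum>k<card V. c r k * ((mat_vec V M ^^ k) (unit_vec (att r))) i)"
  proof (intro exI ballI)
    fix i assume i: "i \<in> V"
    have "x i = lin (I \<times> {..<n}) c F i" using w0 i w_def by simp
    also have "\<dots> = (\<Sum>r\<in>I. \<Sum>k<n. c (r, k) * F (r, k) i)"
      unfolding lin_def by (simp add: sum.cartesian_product)
    finally show "x i = (\<Sum>r\<in>I. \<Sum>k<card V. (\<lambda>r k. c (r, k)) r k * ((mat_vec V M ^^ k) (unit_vec (att r))) i)"
      by (simp add: n_def F_def FF_def[OF fV fI] b_def)
  qed
qed

lemma split_row:
  fixes M :: "'a \<Rightarrow> 'a \<Rightarrow> real"
  assumes "finite A" "finite B" "A \<inter> B = {}" "b \<in> B"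
    and h: "\<And>j. j \<in> B \<Longrightarrow> M i j = (if i = a \<and> j = b then M a b else 0)"
  shows "(\<Sum>j\<in>A \<union> B. M i j * w j) = (\<Sum>j\<in>A. M i j * w j) + (if i = a then M a b * w b else 0)"
proof -
  have "(\<Sum>j\<in>A \<union> B. M i j * w j) = (\<Sum>j\<in>A. M i j * w j) + (\<Sum>j\<in>B. M i j * w j)"
    using assms by (simp add: sum.union_disjoint)
  also have "(\<Sum>j\<in>B. M i j * w j) = (\<Sum>j\<in>B. if j = b then (if i = a then M a b * w b else 0) else 0)"
    using h by (intro sum.cong) auto
  also have "\<dots> = (if i = a then M a b * w b else 0)" using assms by simp
  finally show ?thesis .
qed

lemma cont_ipc: "continuous_on UNIV (\<lambda>v::'a \<Rightarrow> real. ip V v c)"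
  unfolding ip_def by (intro continuous_on_sum continuous_on_mult continuous_on_product_coordinates continuous_on_const)

theorem corollary2:
  fixes Vi Vj :: "'a set" and Ei Ej :: "'a \<Rightarrow> 'a \<Rightarrow> bool"
    and Ii Ij :: "'b set" and att :: "'b \<Rightarrow> 'a" and k l :: 'a
  assumes "network Vi Ei Ii att" and "network Vj Ej Ij att"
    and "Vi \<inter> Vj = {}" and "Ii \<inter> Ij = {}"
    and "SSC Vi Ei Ii att" and "SSC Vj Ej Ij att"
    and "k \<in> Vi" and "l \<in> Vj"
  shows "SSC (Vi \<union> Vj)
             (\<lambda>a b. Ei a b \<or> Ej a b \<or> (a = k \<and> b = l) \<or> (a = l \<and> b = k))
             (Ii \<union> Ij) att"
proof -
  note netI = assms(1) and netJ = assms(2) and disj = assms(3) and sscI = assms(5) and sscJ = assms(6)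
    and kI = assms(7) and lJ = assms(8)
  have fVi: "finite Vi" and fIi: "finite Ii" and attI: "att ` Ii \<subseteq> Vi"
    and EiV: "\<And>a b. Ei a b \<Longrightarrow> a \<in> Vi \<and> b \<in> Vi"
    using netI unfolding network_def state_graph_def by auto
  have fVj: "finite Vj" and fIj: "finite Ij" and attJ: "att ` Ij \<subseteq> Vj"
    and EjV: "\<And>a b. Ej a b \<Longrightarrow> a \<in> Vj \<and> b \<in> Vj"
    using netJ unfolding network_def state_graph_def by auto
  define V where "V = Vi \<union> Vj"
  define E where "E = (\<lambda>a b. Ei a b \<or> Ej a b \<or> (a = k \<and> b = l) \<or> (a = l \<and> b = k))"
  define I where "I = Ii \<union> Ij"
  have fV: "finite V" and fI: "finite I" and attV: "att ` I \<subseteq> V"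
    using fVi fVj fIi fIj attI attJ by (auto simp: V_def I_def)
  have "SSC V E I att" unfolding SSC_def
  proof (intro allI impI)
    fix M assume inQ: "in_Q V E M"
    have sym: "\<And>i j. i \<in> V \<Longrightarrow> j \<in> V \<Longrightarrow> M i j = M j i" using inQ unfolding in_Q_def by blast
    have offp: "\<And>i j. i \<in> V \<Longrightarrow> j \<in> V \<Longrightarrow> i \<noteq> j \<Longrightarrow> E i j \<Longrightarrow> M i j > 0"
      using inQ unfolding in_Q_def by blast
    have off0: "\<And>i j. i \<in> V \<Longrightarrow> j \<in> V \<Longrightarrow> i \<noteq> j \<Longrightarrow> \<not> E i j \<Longrightarrow> M i j = 0"
      using inQ unfolding in_Q_def by blast
    have kl: "k \<noteq> l" using kI lJ disj by auto
    have Mkl: "M k l > 0" using offp[of k l] kI lJ kl by (auto simp: V_def E_def)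
    have Mlk: "M l k = M k l" using sym kI lJ by (auto simp: V_def)
    show "controllable V M I att"
    proof (rule ctrl_crit[OF fV fI attV])
      fix v
      assume hv: "\<forall>r\<in>I. \<forall>k. ip V v ((mat_vec V M ^^ k) (unit_vec (att r))) = 0"
      show "\<forall>i\<in>V. v i = 0"
      proof (rule ccontr)
        assume "\<not> ?thesis"
        then obtain i0 where i0: "i0 \<in> V" "v i0 \<noteq> 0" by auto
        define P where "P z \<longleftrightarrow> (\<forall>i. i \<notin> V \<longrightarrow> z i = 0) \<and>
            (\<forall>r\<in>I. \<forall>k. ip V z ((mat_vec V M ^^ k) (unit_vec (att r))) = 0)" for z
        define u where "u = (\<lambda>i. if i \<in> V then v i else 0)"
        have Pu: "P u" unfolding P_def
        proof (intro conjI allI ballI impI)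
          fix r k assume "r \<in> I"
          then show "ip V u ((mat_vec V M ^^ k) (unit_vec (att r))) = 0"
            using hv ip_cong[of V u v] u_def by auto
        qed (auto simp: u_def)
        have ex: "\<exists>w lam. P w \<and> (\<exists>i\<in>V. w i \<noteq> 0) \<and> (\<forall>i\<in>V. mat_vec V M w i = lam * w i)"
        proof (rule eigen_exists[of V M P u i0, OF fV sym])
          show "\<And>v i. P v \<Longrightarrow> i \<notin> V \<Longrightarrow> v i = 0" unfolding P_def by blast
          show "\<And>v w. P v \<Longrightarrow> P w \<Longrightarrow> P (\<lambda>i. v i + w i)" unfolding P_def by (simp add: ip_add_left)
          show "\<And>a v. P v \<Longrightarrow> P (\<lambda>i. a * v i)" unfolding P_def by (simp add: ip_scale_left)
          show "P (\<lambda>i. if i \<in> V then mat_vec V M z i else 0)" if Pz: "P z" for z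
            unfolding P_def
          proof (intro conjI allI ballI impI)
            fix r k assume r: "r \<in> I"
            have "ip V (\<lambda>i. if i \<in> V then mat_vec V M z i else 0) ((mat_vec V M ^^ k) (unit_vec (att r)))
                = ip V (mat_vec V M z) ((mat_vec V M ^^ k) (unit_vec (att r)))" by (rule ip_cong) auto
            also have "\<dots> = ip V z ((mat_vec V M ^^ Suc k) (unit_vec (att r)))"
              using mv_sym[of V M, OF sym] by simp
            also have "\<dots> = 0" using Pz r unfolding P_def by blast
            finally show "ip V (\<lambda>i. if i \<in> V then mat_vec V M z i else 0) ((mat_vec V M ^^ k) (unit_vec (att r))) = 0" .
          qed auto
          have "{z. P z} = (\<Inter>i\<in>-V. {z. z i = 0}) \<inter>
              (\<Inter>r\<in>I. \<Inter>k. {z. ip V z ((mat_vec V M ^^ k) (unit_vec (att r))) = 0})"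
            unfolding P_def by auto
          also have "closed \<dots>"
            by (intro closed_Int closed_INT ballI closed_Collect_eq cont_ipc continuous_on_const
                continuous_on_product_coordinates)
          finally show "closed {z. P z}" .
        qed (use Pu i0 u_def in auto)
        then obtain w lam where Pw: "P w" and wnz: "\<exists>i\<in>V. w i \<noteq> 0"
          and eig: "\<forall>i\<in>V. mat_vec V M w i = lam * w i" by blast
        have w0: "\<forall>r\<in>I. w (att r) = 0"
        proof
          fix r assume r: "r \<in> I"
          then have "ip V w ((mat_vec V M ^^ 0) (unit_vec (att r))) = 0" using Pw unfolding P_def by blast
          moreover have "att r \<in> V" using attV r by auto
          ultimately show "w (att r) = 0" using unit_ip[OF _ fV] by simp
        qed
        have crossI: "M i j = (if i = k \<and> j = l then M k l else 0)" if "i \<in> Vi" "j \<in> Vj" for i j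
        proof (cases "i = k \<and> j = l")
          case False
          have "\<not> E i j" using False that disj EiV EjV kI lJ unfolding E_def by blast
          moreover have "i \<noteq> j" using that disj by auto
          ultimately show ?thesis using off0[of i j] that False by (auto simp: V_def)
        qed simp
        have crossJ: "M i j = (if i = l \<and> j = k then M l k else 0)" if "i \<in> Vj" "j \<in> Vi" for i j
          using crossI[of j i] that sym[of i j] by (auto simp: V_def)
        have eqI: "\<forall>i\<in>Vi. (\<Sum>j\<in>Vi. M i j * w j) + (if i = k then M k l * w l else 0) = lam * w i"
        proof
          fix i assume i: "i \<in> Vi"
          have "lam * w i = mat_vec V M w i" using eig i by (auto simp: V_def)
          also have "\<dots> = (\<Sum>j\<in>Vi \<union> Vj. M i j * w j)" by (simp add: mat_vec_def V_def)
          also have "\<dots> = (\<Sum>j\<in>Vi. M i j * w j) + (if i = k then M k l * w l else 0)"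
            by (rule split_row[OF fVi fVj disj lJ]) (use crossI i in auto)
          finally show "(\<Sum>j\<in>Vi. M i j * w j) + (if i = k then M k l * w l else 0) = lam * w i" by simp
        qed
        have eqJ: "\<forall>i\<in>Vj. (\<Sum>j\<in>Vj. M i j * w j) + (if i = l then M l k * w k else 0) = lam * w i"
        proof
          fix i assume i: "i \<in> Vj"
          have "lam * w i = mat_vec V M w i" using eig i by (auto simp: V_def)
          also have "\<dots> = (\<Sum>j\<in>Vj \<union> Vi. M i j * w j)" by (simp add: mat_vec_def V_def Un_commute)
          also have "\<dots> = (\<Sum>j\<in>Vj. M i j * w j) + (if i = l then M l k * w k else 0)"
            by (rule split_row[OF fVj fVi _ kI]) (use crossJ i disj in auto)
          finally show "(\<Sum>j\<in>Vj. M i j * w j) + (if i = l then M l k * w k else 0) = lam * w i" by simp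
        qed
        have symI: "\<And>i j. i \<in> Vi \<Longrightarrow> j \<in> Vi \<Longrightarrow> M i j = M j i" using sym by (auto simp: V_def)
        have symJ: "\<And>i j. i \<in> Vj \<Longrightarrow> j \<in> Vj \<Longrightarrow> M i j = M j i" using sym by (auto simp: V_def)
        have offI: "\<And>i j. i \<in> Vi \<Longrightarrow> j \<in> Vi \<Longrightarrow> i \<noteq> j \<Longrightarrow> (Ei i j \<longrightarrow> M i j > 0) \<and> (\<not> Ei i j \<longrightarrow> M i j = 0)"
        proof -
          fix i j assume ij: "i \<in> Vi" "j \<in> Vi" "i \<noteq> j"
          have "E i j \<longleftrightarrow> Ei i j" using ij disj EjV lJ unfolding E_def by blast
          then show "(Ei i j \<longrightarrow> M i j > 0) \<and> (\<not> Ei i j \<longrightarrow> M i j = 0)"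
            using offp[of i j] off0[of i j] ij by (auto simp: V_def)
        qed
        have offJ: "\<And>i j. i \<in> Vj \<Longrightarrow> j \<in> Vj \<Longrightarrow> i \<noteq> j \<Longrightarrow> (Ej i j \<longrightarrow> M i j > 0) \<and> (\<not> Ej i j \<longrightarrow> M i j = 0)"
        proof -
          fix i j assume ij: "i \<in> Vj" "j \<in> Vj" "i \<noteq> j"
          have "E i j \<longleftrightarrow> Ej i j" using ij disj EiV kI unfolding E_def by blast
          then show "(Ej i j \<longrightarrow> M i j > 0) \<and> (\<not> Ej i j \<longrightarrow> M i j = 0)"
            using offp[of i j] off0[of i j] ij by (auto simp: V_def)
        qed
        have w0I: "\<forall>r\<in>Ii. w (att r) = 0" and w0J: "\<forall>r\<in>Ij. w (att r) = 0" using w0 by (auto simp: I_def)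
        have wk: "w k = 0"
        proof (rule ccontr)
          assume nz: "w k \<noteq> 0"
          have "\<forall>i\<in>Vi. w i = 0"
            by (rule side[OF netI sscI kI symI offI w0I eqI]) (use nz in auto)
          then show False using nz kI by auto
        qed
        have zJ: "\<forall>i\<in>Vj. w i = 0"
          by (rule side[OF netJ sscJ lJ symJ offJ w0J eqJ]) (use wk in auto)
        then have wl: "w l = 0" using lJ by auto
        have zI: "\<forall>i\<in>Vi. w i = 0"
          by (rule side[OF netI sscI kI symI offI w0I eqI]) (use wl in auto)
        show False using zI zJ wnz by (auto simp: V_def)
      qed
    qed
  qed
  then show ?thesis unfolding V_def E_def I_def .
qed

end
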